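(* Let $p\geq 3$ be a prime, $u\in\{1,\ldots,p-1\}$ and $s$ a positive integer. Then for every integer $n>up^{s}$ we have $$\nu_{p}\big(A_{p,(p-1)(up^s-1)}(n)\big)\geq 1.$$
   Context: For an integer $m\geq 2$ and a positive integer $k$, the integers $A_{m,k}(n)$, $n\in\mathbb{N}=\{0,1,2,\ldots\}$, are defined by the formal power series identity $\prod_{i=0}^{\infty}\big(1-x^{m^{i}}\big)^{-k}=\sum_{n=0}^{\infty}A_{m,k}(n)x^{n}$. Equivalently, $A_{m,k}(n)$ is the number of representations of $n$ as a sum of powers of $m$ where each summand carries one of $k$ colors. For a prime $p$, $\nu_p(n)$ denotes the $p$-adic valuation of the integer $n$, with $\nu_p(0)=+\infty$. *)

theory Defs
  imports "HOL-Computational_Algebra.Computational_Algebra" "HOL-Number_Theory.Number_Theory"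
begin

text \<open>The series 1/(1 - x^d) = sum_{j>=0} x^(d j) for d >= 1, written out over the
  integers (int fps has no inverse operation). It satisfies
  geom_fps d * (1 - x^d) = 1.\<close>
definition geom_fps :: "nat \<Rightarrow> int fps" where
  "geom_fps d = Abs_fps (\<lambda>n. if d dvd n then 1 else 0)"

definition Aprod :: "nat \<Rightarrow> nat \<Rightarrow> nat \<Rightarrow> int fps" where
  "Aprod m k N = (\<Prod>i\<le>N. geom_fps (m ^ i) ^ k)"

text \<open>A_{m,k}(n): the n-th coefficient of prod_{i>=0} (1 - x^(m^i))^(-k).
  For m >= 2, m^i > n when i > n, so those factors are 1 modulo x^(n+1) and
  the coefficient of x^n of the infinite product equals that of the partial
  product over i <= n.\<close>
definition A :: "nat \<Rightarrow> nat \<Rightarrow> nat \<Rightarrow> int" where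
  "A m k n = fps_nth (Aprod m k n) n"


end

theory Submission
  imports Defs
begin

lemma pdvd_power_diff:
  fixes a b :: "'a::comm_ring_1"
  shows "(a - b) dvd (a ^ n - b ^ n)"
  using power_diff_sumr2[of a n b] by simp

lemma frob:
  fixes a b :: "'a::comm_ring_1"
  assumes "prime p"
  shows "(of_nat p :: 'a) dvd ((a + b) ^ p - a ^ p - b ^ p)"
proof -
  have p0: "p > 0" using assms prime_gt_0_nat by blast
  have "(a + b) ^ p = (\<Sum>k\<le>p. of_nat (p choose k) * a ^ k * b ^ (p - k))"
    by (rule binomial_ring)
  also have "{..p} = insert p (insert 0 {1..<p})" using p0 by auto
  also have "(\<Sum>k\<in>insert p (insert 0 {1..<p}). of_nat (p choose k) * a ^ k * b ^ (p - k))
      = a ^ p + b ^ p + (\<Sum>k\<in>{1..<p}. of_nat (p choose k) * a ^ k * b ^ (p - k))"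
    using p0 by (simp add: algebra_simps)
  finally have e: "(a + b) ^ p - a ^ p - b ^ p = (\<Sum>k\<in>{1..<p}. of_nat (p choose k) * a ^ k * b ^ (p - k))"
    by simp
  have "(of_nat p :: 'a) dvd (\<Sum>k\<in>{1..<p}. of_nat (p choose k) * a ^ k * b ^ (p - k))"
  proof (rule dvd_sum)
    fix k assume "k \<in> {1..<p}"
    then have "p dvd (p choose k)" using dvd_choose_prime[of k p] assms by auto
    then obtain c where "p choose k = p * c" by (auto elim: dvdE)
    then show "(of_nat p :: 'a) dvd of_nat (p choose k) * a ^ k * b ^ (p - k)"
      by (simp add: mult.assoc)
  qed
  then show ?thesis using e by simp
qed

definition cg :: "nat \<Rightarrow> int fps \<Rightarrow> int fps \<Rightarrow> bool" where
  "cg p f g \<longleftrightarrow> (of_nat p :: int fps) dvd (f - g)"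

lemma cg_refl: "cg p f f" by (simp add: cg_def)
lemma cg_sym: "cg p f g \<Longrightarrow> cg p g f"
  unfolding cg_def by (metis dvd_minus_iff minus_diff_eq)
lemma cg_trans: "cg p f g \<Longrightarrow> cg p g h \<Longrightarrow> cg p f h"
  unfolding cg_def using dvd_add by fastforce
lemma cg_mult: "cg p f g \<Longrightarrow> cg p f' g' \<Longrightarrow> cg p (f * f') (g * g')"
proof -
  assume a: "cg p f g" "cg p f' g'"
  have "f * f' - g * g' = (f - g) * f' + g * (f' - g')" by (simp add: algebra_simps)
  then show ?thesis using a unfolding cg_def by (simp add: dvd_add dvd_mult dvd_mult2)
qed
lemma cg_power: "cg p f g \<Longrightarrow> cg p (f ^ n) (g ^ n)"
  unfolding cg_def using pdvd_power_diff dvd_trans by blast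

lemma cg_nth: "cg p f g \<Longrightarrow> int p dvd (f $ n - g $ n)"
proof -
  assume "cg p f g"
  then obtain h where "f - g = of_nat p * h" unfolding cg_def by blast
  then have "(f - g) $ n = (of_nat p * h) $ n" by simp
  also have "(of_nat p :: int fps) = fps_const (int p)" by (simp add: fps_of_nat)
  finally show ?thesis by simp
qed

lemma frob1:
  assumes "prime p" "odd p"
  shows "cg p ((1 - (fps_X ^ q)) ^ p) (1 - (fps_X ^ (q * p)))"
proof -
  have "(of_nat p :: int fps) dvd ((1 + (- (fps_X ^ q))) ^ p - 1 ^ p - (- (fps_X ^ q)) ^ p)"
    by (rule frob[OF assms(1)])
  moreover have "(- ((fps_X :: int fps) ^ q)) ^ p = - (fps_X ^ (q * p))"
    using assms(2) by (simp add: power_minus_odd power_mult)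
  ultimately have "(of_nat p :: int fps) dvd ((1 - fps_X ^ q) ^ p - 1 + fps_X ^ (q * p))" by simp
  moreover have "(1 - fps_X ^ q) ^ p - 1 + fps_X ^ (q * p) = (1 - fps_X ^ q) ^ p - (1 - (fps_X :: int fps) ^ (q * p))"
    by (simp add: algebra_simps)
  ultimately show ?thesis unfolding cg_def by simp
qed

lemma frob_iter:
  assumes "prime p" "odd p"
  shows "cg p ((1 - fps_X) ^ (p ^ i)) (1 - fps_X ^ (p ^ i))"
proof (induction i)
  case 0 then show ?case by (simp add: cg_refl)
next
  case (Suc i)
  have "(1 - (fps_X :: int fps)) ^ (p ^ Suc i) = ((1 - fps_X) ^ (p ^ i)) ^ p"
    by (simp add: power_mult[symmetric] mult.commute)
  moreover have "cg p (((1 - fps_X) ^ (p ^ i)) ^ p) ((1 - fps_X ^ (p ^ i)) ^ p)"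
    by (rule cg_power[OF Suc.IH])
  moreover have "cg p ((1 - fps_X ^ (p ^ i)) ^ p) (1 - fps_X ^ (p ^ Suc i))"
    using frob1[OF assms, of "p ^ i"] by (simp add: mult.commute)
  ultimately show ?case using cg_trans by metis
qed

lemma prod_cg:
  assumes "prime p" "odd p"
  shows "cg p (\<Prod>i\<le>N. 1 - fps_X ^ (p ^ i)) ((1 - fps_X) ^ (\<Sum>i\<le>N. p ^ i))"
proof (induction N)
  case 0 then show ?case using frob_iter[OF assms, of 0] by simp
next
  case (Suc N)
  have "cg p ((\<Prod>i\<le>N. 1 - fps_X ^ (p ^ i)) * (1 - fps_X ^ (p ^ Suc N)))
           ((1 - fps_X) ^ (\<Sum>i\<le>N. p ^ i) * (1 - fps_X) ^ (p ^ Suc N))"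
    by (rule cg_mult[OF Suc.IH cg_sym[OF frob_iter[OF assms]]])
  then show ?case by (simp add: power_add)
qed

lemma geom_mult: "d \<ge> 1 \<Longrightarrow> geom_fps d * (1 - fps_X ^ d) = 1"
proof (rule fps_ext)
  fix n assume d: "d \<ge> 1"
  have "(geom_fps d * (1 - fps_X ^ d)) $ n = geom_fps d $ n - (fps_X ^ d * geom_fps d) $ n"
    by (simp add: algebra_simps)
  also have "\<dots> = (1 :: int fps) $ n"
    using d by (auto simp: fps_X_power_mult_nth geom_fps_def dvd_diff_nat dvd_imp_le)
      (metis dvd_minus_self le_add_diff_inverse2 not_less dvd_add_right_iff)+
  finally show "(geom_fps d * (1 - fps_X ^ d)) $ n = (1 :: int fps) $ n" .
qed

lemma one_minus_X_pow_nth: "n > m \<Longrightarrow> ((1 - fps_X :: int fps) ^ m) $ n = 0"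
proof (induction m arbitrary: n)
  case 0 then show ?case by simp
next
  case (Suc m)
  have "((1 - fps_X :: int fps) ^ Suc m) $ n = ((1 - fps_X) ^ m) $ n - (fps_X * (1 - fps_X) ^ m) $ n"
    by (simp add: algebra_simps)
  then show ?case using Suc by simp
qed

lemma geom_sum_nat: "(p - 1) * (\<Sum>i\<le>N. p ^ i) + 1 = p ^ Suc N" if "p \<ge> 1" for p N :: nat
proof (induction N)
  case 0 then show ?case using that by simp
next
  case (Suc N)
  have "(p - 1) * (\<Sum>i\<le>Suc N. p ^ i) + 1 = ((p - 1) * (\<Sum>i\<le>N. p ^ i) + 1) + (p - 1) * p ^ Suc N"
    by (simp add: algebra_simps)
  also have "\<dots> = p ^ Suc N + (p - 1) * p ^ Suc N" using Suc by simp
  also have "\<dots> = p * p ^ Suc N" using that by (simp add: algebra_simps)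
  finally show ?case by simp
qed

theorem theorem3p1:
  fixes p u s n :: nat
  assumes "prime p" and "p \<ge> 3"
    and "1 \<le> u" and "u \<le> p - 1"
    and "s \<ge> 1"
    and "n > u * p ^ s"
  shows "(int p) dvd A p ((p - 1) * (u * p ^ s - 1)) n"
proof -
  have odd: "odd p" using assms(1,2) prime_odd_nat by auto
  define m where "m = u * p ^ s - 1"
  define M where "M = p ^ Suc n"
  define P :: "int fps" where "P = (\<Prod>i\<le>n. 1 - fps_X ^ (p ^ i))"
  define Q where "Q = (\<Prod>i\<le>n. geom_fps (p ^ i))"
  define S where "S = (\<Sum>i\<le>n. p ^ i)"
  define R where "R = Q ^ (p - 1)"
  define Y :: "int fps" where "Y = 1 - fps_X"
  have p1: "p \<ge> 1" using assms by simp
  have QP: "Q * P = 1"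
    unfolding Q_def P_def prod.distrib[symmetric]
    by (rule prod.neutral) (use p1 geom_mult in auto)
  have RP: "R * P ^ (p - 1) = 1" unfolding R_def by (simp add: power_mult_distrib[symmetric] QP)
  have c1: "cg p (P ^ (p - 1)) (Y ^ (S * (p - 1)))"
    unfolding P_def Y_def S_def power_mult using cg_power[OF prod_cg[OF assms(1) odd]] .
  have "M = Suc (S * (p - 1))"
    unfolding M_def S_def using geom_sum_nat[OF p1, of n] by (simp add: mult.commute)
  then have "Y * Y ^ (S * (p - 1)) = Y ^ M" by simp
  then have c2a: "cg p (Y * P ^ (p - 1)) (Y ^ M)"
    using cg_mult[OF cg_refl c1, of Y] by simp
  have c2b: "cg p (Y ^ M) (1 - fps_X ^ M)"
    unfolding M_def Y_def by (rule frob_iter[OF assms(1) odd])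
  have c2: "cg p (Y * P ^ (p - 1)) (1 - fps_X ^ M)"
    by (rule cg_trans[OF c2a c2b])
  have c3: "cg p (Y * P ^ (p - 1) * R) ((1 - fps_X ^ M) * R)"
    by (rule cg_mult[OF c2 cg_refl])
  have "Y * P ^ (p - 1) * R = Y" using RP by (simp add: mult.commute mult.left_commute)
  then have c3': "(of_nat p :: int fps) dvd (Y - (1 - fps_X ^ M) * R)" using c3 unfolding cg_def by metis
  have e4: "R - (Y + fps_X ^ M * R) = - (Y - (1 - fps_X ^ M) * R)" by (simp add: algebra_simps)
  have c4: "cg p R (Y + fps_X ^ M * R)"
    unfolding cg_def e4 dvd_minus_iff by (rule c3')
  have c5: "cg p (R ^ m) ((Y + fps_X ^ M * R) ^ m)" by (rule cg_power[OF c4])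
  have "(Y + fps_X ^ M * R - Y) dvd ((Y + fps_X ^ M * R) ^ m - Y ^ m)"
    by (rule pdvd_power_diff)
  then obtain T where T: "(Y + fps_X ^ M * R) ^ m - Y ^ m = fps_X ^ M * R * T" by (auto elim: dvdE)
  have AQ: "A p ((p - 1) * m) n = (R ^ m) $ n"
    unfolding A_def Aprod_def R_def Q_def by (simp add: power_mult prod_power_distrib)
  have "int p dvd ((R ^ m) $ n - ((Y + fps_X ^ M * R) ^ m) $ n)" by (rule cg_nth[OF c5])
  moreover have "((Y + fps_X ^ M * R) ^ m) $ n = (Y ^ m) $ n + (fps_X ^ M * (R * T)) $ n"
    using T by (metis add_diff_cancel_left' diff_add_cancel fps_add_nth mult.assoc)
  moreover have "m < n" unfolding m_def using assms(6) by simp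
  moreover have "n < M"
  proof -
    have "n < 2 ^ n" by (rule less_exp)
    also have "\<dots> \<le> p ^ n" using assms(2) by (simp add: power_mono)
    also have "\<dots> \<le> M" unfolding M_def using p1 by simp
    finally show ?thesis .
  qed
  ultimately have "int p dvd (R ^ m) $ n"
    unfolding Y_def by (simp add: one_minus_X_pow_nth fps_X_power_mult_nth)
  then show ?thesis unfolding m_def[symmetric] AQ .
qed

end
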